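(* For $n>2$, the image $\eta(G_{n,\mathcal{P}}^2)$ of $G_{n,\mathcal{P}}^2$ under the homomorphism $\eta\colon G_{n,\mathcal{P}}^2\to G_{n,\mathcal{D}}^2$ is isomorphic to $H_{n,\mathcal{D}}^2$.
   Context: $G_{n,\mathcal{P}}^2$ has generators $a_{ij}^{\epsilon}$ ($\{i,j\}\subset\{1,\dots,n\}$, $i<j$, $\epsilon\in\{0,1\}$) and relations $(a_{ij}^\epsilon)^2=1$; $a_{ij}^{\epsilon}a_{kl}^{\epsilon'}=a_{kl}^{\epsilon'}a_{ij}^{\epsilon}$ for $\{i,j\}\cap\{k,l\}=\emptyset$; $a_{ij}^{\epsilon_{ij}}a_{ik}^{\epsilon_{ik}}a_{jk}^{\epsilon_{jk}}=a_{jk}^{\epsilon_{jk}}a_{ik}^{\epsilon_{ik}}a_{ij}^{\epsilon_{ij}}$ for distinct $i,j,k$ with $\epsilon_{ij}+\epsilon_{ik}+\epsilon_{jk}\equiv0\pmod2$. $G_{n,\mathcal{D}}^2$ has generators $a_{ij}$ ($i<j$) and $\tau_i$ ($1\le i\le n$) with relations: $a_{ij}^2=1$; $a_{ij}a_{kl}=a_{kl}a_{ij}$ for distinct $i,j,k,l$; $a_{ij}a_{ik}a_{jk}=a_{jk}a_{ik}a_{ij}$ for distinct $i,j,k$; $\tau_i^2=1$; $\tau_i\tau_j=\tau_j\tau_i$; $\tau_i\tau_ja_{ij}\tau_j\tau_i=a_{ij}$; $a_{ij}\tau_k=\tau_ka_{ij}$ for distinct $i,j,k$. $H_{n,\mathcal{D}}^2$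 is the subgroup of $G_{n,\mathcal{D}}^2$ of elements represented by words in which, for each $i$, the number of letters $\tau_i$ is even (well defined since the relations preserve these parities). $\eta$ is the homomorphism with $\eta(a_{ij}^0)=a_{ij}$ and $\eta(a_{ij}^1)=\tau_ia_{ij}\tau_i$ for $i<j$. *)

theory Defs
  imports "HOL-Algebra.Group"
begin

text \<open>All generators of the groups considered here satisfy the relation x^2 = 1,
so every group element is represented by a positive word (inverse of a word = its
reverse).\<close>

inductive_set pres_eq :: "'g set \<Rightarrow> ('g list \<times> 'g list) set \<Rightarrow> ('g list \<times> 'g list) set"
  for S R where
  refl: "w \<in> lists S \<Longrightarrow> (w, w) \<in> pres_eq S R"
| sym: "(u, v) \<in> pres_eq S R \<Longrightarrow> (v, u) \<in> pres_eq S R"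
| trans: "(u, v) \<in> pres_eq S R \<Longrightarrow> (v, w) \<in> pres_eq S R \<Longrightarrow> (u, w) \<in> pres_eq S R"
| rel: "(u, v) \<in> R \<Longrightarrow> xs \<in> lists S \<Longrightarrow> ys \<in> lists S \<Longrightarrow>
        (xs @ u @ ys, xs @ v @ ys) \<in> pres_eq S R"

definition presented_group :: "'g set \<Rightarrow> ('g list \<times> 'g list) set \<Rightarrow> 'g list set monoid" where
  "presented_group S R =
     \<lparr> carrier = lists S // pres_eq S R,
       mult = (\<lambda>X Y. \<Union>x\<in>X. \<Union>y\<in>Y. pres_eq S R `` {x @ y}),
       one = pres_eq S R `` {[]} \<rparr>"

text \<open>Generator a_{ij}^e (i<j) is encoded as (i, j, e) with e = True meaning epsilon = 1.
For an unordered pair {i,j}, aP i j e denotes the generator a_{min,max}^e.\<close>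

type_synonym pgen = "nat \<times> nat \<times> bool"

definition aP :: "nat \<Rightarrow> nat \<Rightarrow> bool \<Rightarrow> pgen" where
  "aP i j e = (min i j, max i j, e)"

definition gensP :: "nat \<Rightarrow> pgen set" where
  "gensP n = {(i, j, e) | i j e. 1 \<le> i \<and> i < j \<and> j \<le> n}"

definition relsP :: "nat \<Rightarrow> (pgen list \<times> pgen list) set" where
  "relsP n =
     {([g, g], []) | g. g \<in> gensP n}
   \<union> {([(i, j, e), (k, l, e')], [(k, l, e'), (i, j, e)]) | i j e k l e'.
        (i, j, e) \<in> gensP n \<and> (k, l, e') \<in> gensP n \<and> {i, j} \<inter> {k, l} = {}}
   \<union> {([aP i j eij, aP i k eik, aP j k ejk], [aP j k ejk, aP i k eik, aP i j eij])
        | i j k eij eik ejk. i \<in> {1..n} \<and> j \<in> {1..n} \<and> k \<in> {1..n} \<and>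
          i \<noteq> j \<and> i \<noteq> k \<and> j \<noteq> k \<and>
          even (of_bool eij + of_bool eik + of_bool ejk :: nat)}"

definition GP :: "nat \<Rightarrow> pgen list set monoid" where
  "GP n = presented_group (gensP n) (relsP n)"

datatype dgen = A nat nat | T nat

definition aD :: "nat \<Rightarrow> nat \<Rightarrow> dgen" where
  "aD i j = A (min i j) (max i j)"

definition gensD :: "nat \<Rightarrow> dgen set" where
  "gensD n = {A i j | i j. 1 \<le> i \<and> i < j \<and> j \<le> n} \<union> {T i | i. 1 \<le> i \<and> i \<le> n}"

definition relsD :: "nat \<Rightarrow> (dgen list \<times> dgen list) set" where
  "relsD n =
     {([A i j, A i j], []) | i j. A i j \<in> gensD n}
   \<union> {([A i j, A k l], [A k l, A i j]) | i j k l.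
        A i j \<in> gensD n \<and> A k l \<in> gensD n \<and> {i, j} \<inter> {k, l} = {}}
   \<union> {([aD i j, aD i k, aD j k], [aD j k, aD i k, aD i j]) | i j k.
        i \<in> {1..n} \<and> j \<in> {1..n} \<and> k \<in> {1..n} \<and> i \<noteq> j \<and> i \<noteq> k \<and> j \<noteq> k}
   \<union> {([T i, T i], []) | i. T i \<in> gensD n}
   \<union> {([T i, T j], [T j, T i]) | i j. T i \<in> gensD n \<and> T j \<in> gensD n}
   \<union> {([T i, T j, A i j, T j, T i], [A i j]) | i j. A i j \<in> gensD n}
   \<union> {([A i j, T k], [T k, A i j]) | i j k.
        A i j \<in> gensD n \<and> T k \<in> gensD n \<and> k \<noteq> i \<and> k \<noteq> j}"

definition GD :: "nat \<Rightarrow> dgen list set monoid" where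
  "GD n = presented_group (gensD n) (relsD n)"

text \<open>H^2_{n,D}: elements represented by a word with an even number of letters tau_i
for each i (the parity is independent of the representative).\<close>

definition HD_carrier :: "nat \<Rightarrow> dgen list set set" where
  "HD_carrier n = {X \<in> carrier (GD n).
     \<exists>w \<in> X. \<forall>i. even (length (filter (\<lambda>x. x = T i) w))}"

definition HD :: "nat \<Rightarrow> dgen list set monoid" where
  "HD n = (GD n)\<lparr>carrier := HD_carrier n\<rparr>"

fun eta_letter :: "pgen \<Rightarrow> dgen list" where
  "eta_letter (i, j, e) = (if e then [T i, A i j, T i] else [A i j])"

definition eta :: "nat \<Rightarrow> pgen list set \<Rightarrow> dgen list set" where
  "eta n X = (\<Union>w\<in>X. pres_eq (gensD n) (relsD n) `` {concat (map eta_letter w)})"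

definition eta_image :: "nat \<Rightarrow> dgen list set monoid" where
  "eta_image n = (GD n)\<lparr>carrier := eta n ` carrier (GP n)\<rparr>"

end

theory Submission
  imports Defs
begin

lemma pres_eq_lists:
  assumes "R \<subseteq> lists S \<times> lists S" "(u,v) \<in> pres_eq S R" shows "u \<in> lists S \<and> v \<in> lists S"
  using assms(2) by induct (use assms(1) in auto)

lemma pres_eq_cong:
  assumes "(u,v) \<in> pres_eq S R" "xs \<in> lists S" "ys \<in> lists S"
  shows "(xs@u@ys, xs@v@ys) \<in> pres_eq S R"
  using assms
proof (induct arbitrary: xs ys rule: pres_eq.induct)
  case (refl w) thus ?case by (intro pres_eq.refl) auto
next case sym thus ?case by (blast intro: pres_eq.sym)
next case trans thus ?case by (blast intro: pres_eq.trans)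
next
  case (rel u v xs' ys')
  have "((xs@xs')@u@(ys'@ys), (xs@xs')@v@(ys'@ys)) \<in> pres_eq S R"
    by (rule pres_eq.rel) (use rel in auto)
  thus ?case by simp
qed

lemma pres_eq_app:
  assumes "R \<subseteq> lists S \<times> lists S" "(u,v) \<in> pres_eq S R" "(u',v') \<in> pres_eq S R"
  shows "(u@u', v@v') \<in> pres_eq S R"
proof -
  have l: "u \<in> lists S" "v \<in> lists S" "u' \<in> lists S" "v' \<in> lists S"
    using pres_eq_lists[OF assms(1)] assms(2,3) by auto
  have "([]@u@u', []@v@u') \<in> pres_eq S R" by (rule pres_eq_cong) (use assms l in auto)
  moreover have "(v@u'@[], v@v'@[]) \<in> pres_eq S R" by (rule pres_eq_cong) (use assms l in auto)
  ultimately show ?thesis by (auto intro: pres_eq.trans)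
qed

lemma pres_eq_R: "(u,v) \<in> R \<Longrightarrow> (u,v) \<in> pres_eq S R"
  using pres_eq.rel[of u v R "[]" S "[]"] by auto

abbreviation rD where "rD n \<equiv> pres_eq (gensD n) (relsD n)"
abbreviation rP where "rP n \<equiv> pres_eq (gensP n) (relsP n)"


lemma gA: "A i j \<in> gensD n \<longleftrightarrow> 1 \<le> i \<and> i < j \<and> j \<le> n" unfolding gensD_def by auto
lemma gT: "T i \<in> gensD n \<longleftrightarrow> 1 \<le> i \<and> i \<le> n" unfolding gensD_def by auto

lemma wfD: "relsD n \<subseteq> lists (gensD n) \<times> lists (gensD n)"
  unfolding relsD_def aD_def by (auto simp: gA gT min_def max_def)

lemma appD: "(u,v) \<in> rD n \<Longrightarrow> (u',v') \<in> rD n \<Longrightarrow> (u@u', v@v') \<in> rD n"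
  using pres_eq_app[OF wfD] by blast

lemma listsD: "(u,v) \<in> rD n \<Longrightarrow> u \<in> lists (gensD n) \<and> v \<in> lists (gensD n)"
  using pres_eq_lists[OF wfD] by blast

lemma reflD: "u \<in> lists (gensD n) \<Longrightarrow> (u,u) \<in> rD n" by (rule pres_eq.refl)
lemma symD: "(u,v) \<in> rD n \<Longrightarrow> (v,u) \<in> rD n" by (rule pres_eq.sym)
lemma transD: "(u,v) \<in> rD n \<Longrightarrow> (v,w) \<in> rD n \<Longrightarrow> (u,w) \<in> rD n" by (rule pres_eq.trans)

lemma AA: "A i j \<in> gensD n \<Longrightarrow> ([A i j, A i j], []) \<in> rD n"
  by (rule pres_eq_R) (auto simp: relsD_def)
lemma TT: "T i \<in> gensD n \<Longrightarrow> ([T i, T i], []) \<in> rD n"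
  by (rule pres_eq_R) (auto simp: relsD_def)
lemma TTc: "T i \<in> gensD n \<Longrightarrow> T j \<in> gensD n \<Longrightarrow> ([T i, T j], [T j, T i]) \<in> rD n"
  by (rule pres_eq_R) (auto simp: relsD_def)
lemma ATc: "A i j \<in> gensD n \<Longrightarrow> T k \<in> gensD n \<Longrightarrow> k \<noteq> i \<Longrightarrow> k \<noteq> j \<Longrightarrow> ([A i j, T k], [T k, A i j]) \<in> rD n"
  by (rule pres_eq_R) (auto simp: relsD_def)
lemma AAc: "A i j \<in> gensD n \<Longrightarrow> A k l \<in> gensD n \<Longrightarrow> {i,j} \<inter> {k,l} = {} \<Longrightarrow> ([A i j, A k l], [A k l, A i j]) \<in> rD n"
  by (rule pres_eq_R) (auto simp: relsD_def)
lemma TTA: "A i j \<in> gensD n \<Longrightarrow> ([T i, T j, A i j, T j, T i], [A i j]) \<in> rD n"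
  by (rule pres_eq_R) (auto simp: relsD_def)
lemma tri: "i \<in> {1..n} \<Longrightarrow> j \<in> {1..n} \<Longrightarrow> k \<in> {1..n} \<Longrightarrow> i \<noteq> j \<Longrightarrow> i \<noteq> k \<Longrightarrow> j \<noteq> k \<Longrightarrow>
   ([aD i j, aD i k, aD j k], [aD j k, aD i k, aD i j]) \<in> rD n"
  by (rule pres_eq_R) (auto simp: relsD_def)

lemma cancel: "(u,[]) \<in> rD n \<Longrightarrow> xs \<in> lists (gensD n) \<Longrightarrow> ys \<in> lists (gensD n) \<Longrightarrow> (xs@u@ys, xs@ys) \<in> rD n"
  using pres_eq_cong[of u "[]" "gensD n" "relsD n" xs ys] by simp

lemma conjAT: assumes "A a b \<in> gensD n" shows "([T b, A a b, T b], [T a, A a b, T a]) \<in> rD n"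
proof -
  have g: "T a \<in> gensD n" "T b \<in> gensD n" using assms by (auto simp: gA gT)
  have "([T a] @ [T a, T b, A a b, T b, T a] @ [T a], [T a] @ [A a b] @ [T a]) \<in> rD n"
    by (rule pres_eq_cong[OF TTA[OF assms]]) (use g in auto)
  moreover have "([] @ [T a, T a] @ [T b, A a b, T b, T a, T a], [] @ [T b, A a b, T b, T a, T a]) \<in> rD n"
    by (rule cancel[OF TT]) (use g assms in auto)
  moreover have "([T b, A a b, T b] @ [T a, T a] @ [], [T b, A a b, T b] @ []) \<in> rD n"
    by (rule cancel[OF TT]) (use g assms in auto)
  ultimately show ?thesis by simp (meson symD transD)
qed

definition commD where "commD n a b \<longleftrightarrow> ([a,b],[b,a]) \<in> rD n"

lemma comm_letter_word: "a \<in> gensD n \<Longrightarrow> y \<in> lists (gensD n) \<Longrightarrow> \<forall>b\<in>set y. commD n a b \<Longrightarrow> (a#y, y@[a]) \<in> rD n"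
proof (induct y)
  case Nil thus ?case by (auto intro: reflD)
next
  case (Cons b y)
  have b: "([b],[b]) \<in> rD n" "(y,y) \<in> rD n" by (rule reflD; use Cons in auto)+
  have "([a,b]@y, [b,a]@y) \<in> rD n"
    using appD[of "[a,b]" "[b,a]" n y y] Cons b by (auto simp: commD_def)
  moreover have "([b] @ (a#y), [b] @ (y@[a])) \<in> rD n"
    using appD[of "[b]" "[b]" n] Cons b by auto
  ultimately show ?case by (auto intro: transD)
qed

lemma comm_word: "x \<in> lists (gensD n) \<Longrightarrow> y \<in> lists (gensD n) \<Longrightarrow> \<forall>a\<in>set x. \<forall>b\<in>set y. commD n a b \<Longrightarrow> (x@y, y@x) \<in> rD n"
proof (induct x)
  case Nil thus ?case by (auto intro: reflD)
next
  case (Cons a x)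
  have b: "([a],[a]) \<in> rD n" "(x,x) \<in> rD n" by (rule reflD; use Cons in auto)+
  have "([a] @ (x@y), [a] @ (y@x)) \<in> rD n"
    using appD[of "[a]" "[a]" n] Cons b by auto
  moreover have "((a#y) @ x, (y@[a]) @ x) \<in> rD n"
    using appD[OF comm_letter_word, of a n y x x] Cons b by auto
  ultimately show ?case by (auto intro: transD)
qed

definition etaw :: "pgen list \<Rightarrow> dgen list" where "etaw u = concat (map eta_letter u)"

lemma etaw_simps[simp]: "etaw [] = []" "etaw (x#u) = eta_letter x @ etaw u" "etaw (u@v) = etaw u @ etaw v"
  by (auto simp: etaw_def)

lemma gP: "(i,j,e) \<in> gensP n \<longleftrightarrow> 1 \<le> i \<and> i < j \<and> j \<le> n" unfolding gensP_def by auto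

lemma eta_letter_lists: "x \<in> gensP n \<Longrightarrow> eta_letter x \<in> lists (gensD n)"
  by (cases x) (auto simp: gP gA gT)

lemma etaw_lists: "u \<in> lists (gensP n) \<Longrightarrow> etaw u \<in> lists (gensD n)"
  by (induct u) (auto simp: eta_letter_lists)

lemma aD_g: "p \<in> {1..n} \<Longrightarrow> q \<in> {1..n} \<Longrightarrow> p \<noteq> q \<Longrightarrow> aD p q \<in> gensD n"
  by (auto simp: aD_def gA min_def max_def)

lemma conjv:
  assumes "p \<in> {1..n}" "q \<in> {1..n}" "v \<in> {1..n}" "p \<noteq> q"
  shows "(eta_letter (aP p q (v=p \<or> v=q)), [T v, aD p q, T v]) \<in> rD n"
proof -
  define a where "a = min p q"
  define b where "b = max p q"
  have ab: "aD p q = A a b" "\<And>e. aP p q e = (a,b,e)" "A a b \<in> gensD n" "T a \<in> gensD n" "T b \<in> gensD n"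
    "T v \<in> gensD n"
    using assms by (auto simp: a_def b_def aD_def aP_def gA gT min_def max_def)
  have vab: "(v=p \<or> v=q) = (v=a \<or> v=b)" by (auto simp: a_def b_def min_def max_def)
  show ?thesis
  proof (cases "v=a \<or> v=b")
    case True
    then show ?thesis
    proof
      assume "v=a" thus ?thesis using ab vab by (auto intro: reflD)
    next
      assume "v=b"
      thus ?thesis using ab vab conjAT[OF ab(3)] by (auto intro: symD)
    qed
  next
    case False
    have "([] @ [T v, A a b] @ [T v], [] @ [A a b, T v] @ [T v]) \<in> rD n"
      by (rule pres_eq_cong[OF symD[OF ATc]]) (use ab False in auto)
    moreover have "([A a b] @ [T v, T v] @ [], [A a b] @ []) \<in> rD n"
      by (rule cancel[OF TT]) (use ab in auto)
    ultimately show ?thesis using ab vab False by simp (meson symD transD)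
  qed
qed

lemma conj3:
  assumes "a \<in> gensD n" "b \<in> gensD n" "c \<in> gensD n" "T v \<in> gensD n"
  shows "([T v,a,T v]@[T v,b,T v]@[T v,c,T v], [T v,a,b,c,T v]) \<in> rD n"
proof -
  have "([T v,a] @ [T v,T v] @ [b,T v,T v,c,T v], [T v,a] @ [b,T v,T v,c,T v]) \<in> rD n"
    by (rule cancel[OF TT]) (use assms in auto)
  moreover have "([T v,a,b] @ [T v,T v] @ [c,T v], [T v,a,b] @ [c,T v]) \<in> rD n"
    by (rule cancel[OF TT]) (use assms in auto)
  ultimately show ?thesis by simp (meson transD)
qed

lemma relsP_D: "(u,v) \<in> relsP n \<Longrightarrow> (etaw u, etaw v) \<in> rD n"
proof (unfold relsP_def, elim UnE)
  assume "(u,v) \<in> {([g, g], []) | g. g \<in> gensP n}"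
  then obtain i j e where u: "u = [(i,j,e),(i,j,e)]" "v = []" "1 \<le> i" "i < j" "j \<le> n"
    by (auto simp: gP)
  have g: "A i j \<in> gensD n" "T i \<in> gensD n" using u by (auto simp: gA gT)
  show ?thesis
  proof (cases e)
    case False thus ?thesis using u AA[OF g(1)] by simp
  next
    case True
    have "([T i, A i j] @ [T i, T i] @ [A i j, T i], [T i, A i j] @ [A i j, T i]) \<in> rD n"
      by (rule cancel[OF TT]) (use g in auto)
    moreover have "([T i] @ [A i j, A i j] @ [T i], [T i] @ [T i]) \<in> rD n"
      by (rule cancel[OF AA]) (use g in auto)
    ultimately show ?thesis using u True TT[OF g(2)] by simp (meson transD)
  qed
next
  assume "(u,v) \<in> {([(i, j, e), (k, l, e')], [(k, l, e'), (i, j, e)]) | i j e k l e'.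
        (i, j, e) \<in> gensP n \<and> (k, l, e') \<in> gensP n \<and> {i, j} \<inter> {k, l} = {}}"
  then obtain i j e k l e' where u: "u = [(i, j, e), (k, l, e')]" "v = [(k, l, e'), (i, j, e)]"
    "(i, j, e) \<in> gensP n" "(k, l, e') \<in> gensP n" "{i, j} \<inter> {k, l} = {}" by fastforce
  have g: "A i j \<in> gensD n" "T i \<in> gensD n" "A k l \<in> gensD n" "T k \<in> gensD n"
    using u by (auto simp: gA gT gP)
  have c: "commD n x y" if "x \<in> {T i, A i j}" "y \<in> {T k, A k l}" for x y
  proof -
    have d: "i \<noteq> k" "i \<noteq> l" "j \<noteq> k" "j \<noteq> l" using u(5) by auto
    have f: "commD n (T i) (T k)" "commD n (T i) (A k l)" "commD n (A i j) (T k)" "commD n (A i j) (A k l)"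
      unfolding commD_def
      using TTc[OF g(2) g(4)] symD[OF ATc[OF g(3) g(2)]] ATc[OF g(1) g(4)] AAc[OF g(1) g(3) u(5)] d by auto
    show ?thesis using that f by auto
  qed
  have "(eta_letter (i,j,e) @ eta_letter (k,l,e'), eta_letter (k,l,e') @ eta_letter (i,j,e)) \<in> rD n"
  proof (rule comm_word)
    have s1: "set (eta_letter (i,j,e)) \<subseteq> {T i, A i j}" "set (eta_letter (k,l,e')) \<subseteq> {T k, A k l}"
      by (cases e; cases e'; simp)+
    show "\<forall>a\<in>set (eta_letter (i, j, e)). \<forall>b\<in>set (eta_letter (k, l, e')). commD n a b"
      using s1 c by blast
    show "eta_letter (i, j, e) \<in> lists (gensD n)" "eta_letter (k, l, e') \<in> lists (gensD n)"
      using s1 g by auto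
  qed
  thus ?thesis using u by simp
next
  assume "(u,v) \<in> {([aP i j eij, aP i k eik, aP j k ejk], [aP j k ejk, aP i k eik, aP i j eij])
        | i j k eij eik ejk. i \<in> {1..n} \<and> j \<in> {1..n} \<and> k \<in> {1..n} \<and>
          i \<noteq> j \<and> i \<noteq> k \<and> j \<noteq> k \<and>
          even (of_bool eij + of_bool eik + of_bool ejk :: nat)}"
  then obtain i j k eij eik ejk where u: "u = [aP i j eij, aP i k eik, aP j k ejk]"
    "v = [aP j k ejk, aP i k eik, aP i j eij]" "i \<in> {1..n}" "j \<in> {1..n}" "k \<in> {1..n}"
    "i \<noteq> j" "i \<noteq> k" "j \<noteq> k" "even (of_bool eij + of_bool eik + of_bool ejk :: nat)" by fastforce
  have g: "aD i j \<in> gensD n" "aD i k \<in> gensD n" "aD j k \<in> gensD n" using u by (auto intro: aD_g)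
  have tr: "([aD i j, aD i k, aD j k], [aD j k, aD i k, aD i j]) \<in> rD n" using u by (intro tri) auto
  show ?thesis
  proof (cases "eij \<or> eik \<or> ejk")
    case False
    thus ?thesis using u tr by (simp add: aP_def aD_def)
  next
    case True
    then obtain x where v: "x \<in> {i,j,k}" "eij = (x=i \<or> x=j)" "eik = (x=i \<or> x=k)" "ejk = (x=j \<or> x=k)"
      using u(6-9) by (cases eij; cases eik; cases ejk) auto
    have vn: "x \<in> {1..n}" "T x \<in> gensD n" using v u by (auto simp: gT)
    have c1: "(eta_letter (aP i j eij), [T x, aD i j, T x]) \<in> rD n"
      using conjv[of i n j x] u vn v by simp
    have c2: "(eta_letter (aP i k eik), [T x, aD i k, T x]) \<in> rD n"
      using conjv[of i n k x] u vn v by simp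
    have c3: "(eta_letter (aP j k ejk), [T x, aD j k, T x]) \<in> rD n"
      using conjv[of j n k x] u vn v by simp
    have "(etaw u, [T x,aD i j,T x]@[T x,aD i k,T x]@[T x,aD j k,T x]) \<in> rD n"
      using u appD[OF c1 appD[OF c2 c3]] by simp
    moreover have "(etaw v, [T x,aD j k,T x]@[T x,aD i k,T x]@[T x,aD i j,T x]) \<in> rD n"
      using u appD[OF c3 appD[OF c2 c1]] by simp
    moreover have "([T x] @ [aD i j, aD i k, aD j k] @ [T x], [T x] @ [aD j k, aD i k, aD i j] @ [T x]) \<in> rD n"
      by (rule pres_eq_cong[OF tr]) (use vn in auto)
    ultimately show ?thesis using conj3[OF g vn(2)] conj3[OF g(3) g(2) g(1) vn(2)]
      by simp (metis symD transD)
  qed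
qed


lemma eta_hom: "(w,w') \<in> rP n \<Longrightarrow> (etaw w, etaw w') \<in> rD n"
proof (induct rule: pres_eq.induct)
  case (refl w) thus ?case by (intro reflD etaw_lists)
next case sym thus ?case by (meson symD)
next case trans thus ?case by (meson transD)
next
  case (rel u v xs ys)
  have "(etaw xs @ etaw u @ etaw ys, etaw xs @ etaw v @ etaw ys) \<in> rD n"
    by (rule pres_eq_cong[OF relsP_D[OF rel(1)]]) (use rel etaw_lists in auto)
  thus ?case by simp
qed

lemma class_eqD: assumes "(a,b) \<in> rD n" shows "rD n `` {a} = rD n `` {b}"
proof (intro equalityI subsetI)
  fix y assume "y \<in> rD n `` {a}"
  hence "(a,y) \<in> rD n" by simp
  thus "y \<in> rD n `` {b}" using transD[OF symD[OF assms]] by simp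
next
  fix y assume "y \<in> rD n `` {b}"
  hence "(b,y) \<in> rD n" by simp
  thus "y \<in> rD n `` {a}" using transD[OF assms] by simp
qed

lemma eta_class: assumes w: "w \<in> lists (gensP n)" shows "eta n (rP n `` {w}) = rD n `` {etaw w}"
proof -
  have "y \<in> rD n `` {etaw w}" if "y \<in> eta n (rP n `` {w})" for y
  proof -
    from that obtain w' where "(w,w') \<in> rP n" "(etaw w', y) \<in> rD n" by (auto simp: eta_def etaw_def)
    thus ?thesis using eta_hom[of w w' n] transD[of "etaw w" "etaw w'" n y] by simp
  qed
  moreover have "y \<in> eta n (rP n `` {w})" if "y \<in> rD n `` {etaw w}" for y
    using that pres_eq.refl[OF w] unfolding eta_def etaw_def by blast
  ultimately show ?thesis by blast
qed

lemma count_etaw: "even (length (filter (\<lambda>x. x = T i) (etaw u)))"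
proof (induct u)
  case Nil thus ?case by simp
next
  case (Cons a u)
  obtain p q e where a: "a = (p,q,e)" by (cases a)
  thus ?case using Cons by (cases e) auto
qed

lemma move1:
  assumes g: "A i j \<in> gensD n" "T k \<in> gensD n"
  shows "\<exists>e'. ([T k] @ eta_letter (i,j,e), eta_letter (i,j,e') @ [T k]) \<in> rD n"
proof -
  have gi: "T i \<in> gensD n" "T j \<in> gensD n" using g by (auto simp: gA gT)
  consider "k \<noteq> i \<and> k \<noteq> j" | "k = i" | "k = j" by blast
  then show ?thesis
  proof cases
    case 1
    have s1: "set (eta_letter (i,j,e)) \<subseteq> {T i, A i j}" by (cases e) auto
    have f: "commD n (T k) (T i)" "commD n (T k) (A i j)"
      unfolding commD_def using TTc[OF g(2) gi(1)] symD[OF ATc[OF g(1) g(2)]] 1 by auto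
    have "([T k] @ eta_letter (i,j,e), eta_letter (i,j,e) @ [T k]) \<in> rD n"
    proof (rule comm_word)
      show "\<forall>a\<in>set [T k]. \<forall>b\<in>set (eta_letter (i, j, e)). commD n a b" using s1 f by auto
      show "[T k] \<in> lists (gensD n)" "eta_letter (i, j, e) \<in> lists (gensD n)" using s1 g gi by auto
    qed
    thus ?thesis by blast
  next
    case 2
    show ?thesis
    proof (cases e)
      case False
      have "([T i, A i j] @ [T i, T i] @ [], [T i, A i j] @ []) \<in> rD n"
        by (rule cancel[OF TT]) (use g gi in auto)
      hence "([T k] @ eta_letter (i,j,e), eta_letter (i,j,True) @ [T k]) \<in> rD n"
        using 2 False by (simp add: symD)
      thus ?thesis by blast
    next
      case True
      have "([] @ [T i, T i] @ [A i j, T i], [] @ [A i j, T i]) \<in> rD n"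
        by (rule cancel[OF TT]) (use g gi in auto)
      hence "([T k] @ eta_letter (i,j,e), eta_letter (i,j,False) @ [T k]) \<in> rD n"
        using 2 True by simp
      thus ?thesis by blast
    qed
  next
    case 3
    show ?thesis
    proof (cases e)
      case False
      have "([T j, A i j] @ [T j, T j] @ [], [T j, A i j] @ []) \<in> rD n"
        by (rule cancel[OF TT]) (use g gi in auto)
      moreover have "([] @ [T j, A i j, T j] @ [T j], [] @ [T i, A i j, T i] @ [T j]) \<in> rD n"
        by (rule pres_eq_cong[OF conjAT[OF g(1)]]) (use gi in auto)
      ultimately have "([T k] @ eta_letter (i,j,e), eta_letter (i,j,True) @ [T k]) \<in> rD n"
        using 3 False by simp (meson symD transD)
      thus ?thesis by blast
    next
      case True
      have "([T j] @ [T i, A i j, T i] @ [], [T j] @ [T j, A i j, T j] @ []) \<in> rD n"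
        by (rule pres_eq_cong[OF symD[OF conjAT[OF g(1)]]]) (use gi in auto)
      moreover have "([] @ [T j, T j] @ [A i j, T j], [] @ [A i j, T j]) \<in> rD n"
        by (rule cancel[OF TT]) (use g gi in auto)
      ultimately have "([T k] @ eta_letter (i,j,e), eta_letter (i,j,False) @ [T k]) \<in> rD n"
        using 3 True by simp (meson transD)
      thus ?thesis by blast
    qed
  qed
qed

lemma move:
  assumes g: "A i j \<in> gensD n"
  shows "ts \<in> lists (gensD n) \<Longrightarrow> \<forall>x\<in>set ts. \<exists>k. x = T k \<Longrightarrow>
     \<exists>e'. (ts @ eta_letter (i,j,e), eta_letter (i,j,e') @ ts) \<in> rD n"
proof (induct ts arbitrary: e)
  case Nil
  have "(i,j,e) \<in> gensP n" using g by (auto simp: gA gP)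
  hence "(eta_letter (i,j,e), eta_letter (i,j,e)) \<in> rD n" by (rule reflD[OF eta_letter_lists])
  hence "([] @ eta_letter (i,j,e), eta_letter (i,j,e) @ []) \<in> rD n" by simp
  thus ?case by blast
next
  case (Cons y ts)
  obtain k where y: "y = T k" using Cons by auto
  have gk: "T k \<in> gensD n" "ts \<in> lists (gensD n)" using Cons y by auto
  have "\<exists>e1. (ts @ eta_letter (i,j,e), eta_letter (i,j,e1) @ ts) \<in> rD n"
    using Cons.hyps[of e] Cons.prems gk by simp
  then obtain e1 where e1: "(ts @ eta_letter (i,j,e), eta_letter (i,j,e1) @ ts) \<in> rD n" by blast
  obtain e2 where e2: "([T k] @ eta_letter (i,j,e1), eta_letter (i,j,e2) @ [T k]) \<in> rD n"
    using move1[OF g gk(1)] by blast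
  have X: "([T k] @ (ts @ eta_letter (i,j,e)) @ [], [T k] @ (eta_letter (i,j,e1) @ ts) @ []) \<in> rD n"
    by (rule pres_eq_cong[OF e1]) (use gk in auto)
  have Y: "(([T k] @ eta_letter (i,j,e1)) @ ts, (eta_letter (i,j,e2) @ [T k]) @ ts) \<in> rD n"
    by (rule appD[OF e2 reflD[OF gk(2)]])
  have h1: "(y # ts @ eta_letter (i,j,e), y # eta_letter (i,j,e1) @ ts) \<in> rD n" using X y by simp
  have h2: "(y # eta_letter (i,j,e1) @ ts, eta_letter (i,j,e2) @ y # ts) \<in> rD n" using Y y by simp
  have "((y # ts) @ eta_letter (i,j,e), eta_letter (i,j,e2) @ y # ts) \<in> rD n"
    using transD[OF h1 h2] by simp
  thus ?case by blast
qed

definition isT :: "dgen \<Rightarrow> bool" where "isT x \<longleftrightarrow> (\<exists>k. x = T k)"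

lemma decomp: "w \<in> lists (gensD n) \<Longrightarrow> \<exists>u \<in> lists (gensP n). (w, etaw u @ filter isT w) \<in> rD n"
proof (induct w rule: rev_induct)
  case Nil thus ?case by (auto intro!: bexI[of _ "[]"] reflD)
next
  case (snoc x w)
  then obtain u where u: "u \<in> lists (gensP n)" "(w, etaw u @ filter isT w) \<in> rD n" by auto
  have gx: "x \<in> gensD n" and gw: "w \<in> lists (gensD n)" using snoc by auto
  have ts: "filter isT w \<in> lists (gensD n)" "\<forall>y\<in>set (filter isT w). \<exists>k. y = T k"
    using gw by (auto simp: isT_def)
  have 1: "(w @ [x], (etaw u @ filter isT w) @ [x]) \<in> rD n"
    by (rule appD[OF u(2) reflD]) (use gx in auto)
  show ?case
  proof (cases x)
    case (T k)
    have f: "filter isT (w@[x]) = filter isT w @ [x]" using T by (simp add: isT_def)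
    show ?thesis using 1 u f by auto
  next
    case (A i j)
    obtain e' where e': "(filter isT w @ eta_letter (i,j,False), eta_letter (i,j,e') @ filter isT w) \<in> rD n"
      using move[OF _ ts(1) ts(2), where e=False] gx A by blast
    have "(etaw u @ (filter isT w @ eta_letter (i,j,False)) @ [], etaw u @ (eta_letter (i,j,e') @ filter isT w) @ []) \<in> rD n"
      by (rule pres_eq_cong[OF e']) (use u etaw_lists in auto)
    hence h2: "(etaw u @ filter isT w @ [A i j], etaw (u @ [(i,j,e')]) @ filter isT w) \<in> rD n"
      by (simp del: eta_letter.simps add: eta_letter.simps[of i j False])
    have h1: "(w @ [x], etaw u @ filter isT w @ [A i j]) \<in> rD n" using 1 A by simp
    have f: "filter isT (w@[x]) = filter isT w" using A by (simp add: isT_def)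
    have "(w @ [x], etaw (u @ [(i,j,e')]) @ filter isT (w @ [x])) \<in> rD n"
      using transD[OF h1 h2] f by simp
    moreover have "u @ [(i,j,e')] \<in> lists (gensP n)" using u gx A by (auto simp: gA gP)
    ultimately show ?thesis by blast
  qed
qed

lemma even_T:
  "ts \<in> lists (gensD n) \<Longrightarrow> \<forall>x\<in>set ts. \<exists>k. x = T k \<Longrightarrow>
   \<forall>i. even (length (filter (\<lambda>x. x = T i) ts)) \<Longrightarrow> (ts, []) \<in> rD n"
proof (induct "length ts" arbitrary: ts rule: less_induct)
  case less
  show ?case
  proof (cases ts)
    case Nil thus ?thesis by (auto intro: reflD)
  next
    case (Cons y rest)
    obtain k where y: "y = T k" using less Cons by auto
    have eqc: "length (filter (\<lambda>x. x = T k) ts) = Suc (length (filter (\<lambda>x. x = T k) rest))"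
      using Cons y by simp
    have ev: "even (length (filter (\<lambda>x. x = T k) ts))" using less(4) by blast
    have o: "odd (length (filter (\<lambda>x. x = T k) rest))" using ev eqc by simp
    have "filter (\<lambda>x. x = T k) rest \<noteq> []" using o by (metis list.size(3) even_zero)
    hence "T k \<in> set rest" by (auto simp: filter_empty_conv)
    then obtain r1 r2 where r: "rest = r1 @ T k # r2" "T k \<notin> set r1" by (metis split_list_first)
    have g: "r1 \<in> lists (gensD n)" "r2 \<in> lists (gensD n)" "T k \<in> gensD n"
      using less(2) Cons r y by auto
    have cm: "\<forall>b\<in>set r1. commD n (T k) b"
    proof
      fix b assume b: "b \<in> set r1"
      then obtain l where bl: "b = T l" using less(3) Cons r by auto
      have "b \<in> gensD n" using g(1) b by auto
      thus "commD n (T k) b" unfolding commD_def using TTc[OF g(3)] bl by auto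
    qed
    have 1: "((T k # r1) @ (T k # r2), (r1 @ [T k]) @ (T k # r2)) \<in> rD n"
      by (rule appD[OF comm_letter_word[OF g(3) g(1) cm] reflD]) (use g in auto)
    have 2: "(r1 @ [T k, T k] @ r2, r1 @ r2) \<in> rD n"
      by (rule cancel[OF TT[OF g(3)]]) (use g in auto)
    have 3: "(r1 @ r2, []) \<in> rD n"
    proof (rule less(1))
      show "length (r1 @ r2) < length ts" using Cons r by simp
      show "r1 @ r2 \<in> lists (gensD n)" using g by auto
      show "\<forall>x\<in>set (r1 @ r2). \<exists>k. x = T k" using less(3) Cons r by auto
      show "\<forall>i. even (length (filter (\<lambda>x. x = T i) (r1 @ r2)))"
      proof
        fix i
        have "even (length (filter (\<lambda>x. x = T i) ts))" using less(4) by blast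
        thus "even (length (filter (\<lambda>x. x = T i) (r1 @ r2)))"
          using Cons r y by (cases "i = k") auto
      qed
    qed
    have e1: "ts = (T k # r1) @ (T k # r2)" using Cons r y by simp
    have e2: "(r1 @ [T k]) @ (T k # r2) = r1 @ [T k, T k] @ r2" by simp
    show ?thesis using transD[OF transD[OF 1[unfolded e2] 2] 3] e1 by simp
  qed
qed

lemma carrier_eq: "eta n ` carrier (GP n) = HD_carrier n"
proof (intro equalityI subsetI)
  fix Y assume "Y \<in> eta n ` carrier (GP n)"
  then obtain X where X: "X \<in> lists (gensP n) // rP n" "Y = eta n X"
    by (auto simp: GP_def presented_group_def)
  then obtain w where w: "X = rP n `` {w}" "w \<in> lists (gensP n)" using quotientE by metis
  have Y: "Y = rD n `` {etaw w}" using X w eta_class by simp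
  have "etaw w \<in> Y" unfolding Y using reflD[OF etaw_lists[OF w(2)]] by simp
  moreover have "Y \<in> carrier (GD n)" unfolding Y
    by (simp add: GD_def presented_group_def quotientI etaw_lists w)
  ultimately show "Y \<in> HD_carrier n" unfolding HD_carrier_def using count_etaw by blast
next
  fix Y assume "Y \<in> HD_carrier n"
  then obtain w where Y: "Y \<in> lists (gensD n) // rD n" "w \<in> Y" "\<forall>i. even (length (filter (\<lambda>x. x = T i) w))"
    by (auto simp: HD_carrier_def GD_def presented_group_def)
  then obtain w0 where w0: "Y = rD n `` {w0}" using quotientE by metis
  have w0w: "(w0, w) \<in> rD n" using Y w0 by auto
  have gw: "w \<in> lists (gensD n)" using listsD[OF w0w] by auto
  obtain u where u: "u \<in> lists (gensP n)" "(w, etaw u @ filter isT w) \<in> rD n" using decomp[OF gw] by blast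
  have "(filter isT w, []) \<in> rD n"
  proof (rule even_T)
    show "filter isT w \<in> lists (gensD n)" "\<forall>x\<in>set (filter isT w). \<exists>k. x = T k"
      using gw by (auto simp: isT_def)
    have "filter (\<lambda>x. x = T i) (filter isT w) = filter (\<lambda>x. x = T i) w" for i
      by (auto simp: isT_def filter_filter intro: filter_cong)
    thus "\<forall>i. even (length (filter (\<lambda>x. x = T i) (filter isT w)))" using Y(3) by simp
  qed
  hence "(etaw u @ filter isT w @ [], etaw u @ []) \<in> rD n"
    by (rule cancel) (use u etaw_lists in auto)
  hence "(w0, etaw u) \<in> rD n" using w0w u by simp (meson transD)
  hence "Y = eta n (rP n `` {u})" using w0 class_eqD eta_class[OF u(1)] by simp
  moreover have "rP n `` {u} \<in> carrier (GP n)"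
    by (simp add: GP_def presented_group_def quotientI u(1))
  ultimately show "Y \<in> eta n ` carrier (GP n)" by blast
qed

theorem mainTheorem5:
  fixes n :: nat
  assumes "n > 2"
  shows "eta_image n \<cong> HD n"
proof -
  have "eta_image n = HD n" unfolding eta_image_def HD_def by (simp add: carrier_eq)
  thus ?thesis by simp
qed

end
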